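(* Let $X\subseteq \mathbb{P}^1\times\mathbb{P}^1\times\mathbb{P}^1$ be a variety of lines such that, for each $h=1,2,3$, $U_h(X)$ resembles a Ferrers diagram. Then $X$ has the $Hyp_6(\star)$-property if and only if for all $a_1,a_2\in[d_1]$, $b_1,b_2\in[d_2]$, $c_1,c_2\in[d_3]$, $$\text{either }\left(\begin{array}{cc}\mu_{a_1b_1c_1} & \mu_{a_1b_2c_1}\\ \mu_{a_2b_1c_1} & \mu_{a_2b_2c_1}\end{array}\right)\neq\left(\begin{array}{cc}3&2\\2&2\end{array}\right)\ \text{or}\ \left(\begin{array}{cc}\mu_{a_1b_1c_2} & \mu_{a_1b_2c_2}\\ \mu_{a_2b_1c_2} & \mu_{a_2b_2c_2}\end{array}\right)\neq\left(\begin{array}{cc}2&2\\2&3\end{array}\right).$$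
   Context: $R=K[x_{1,0},x_{1,1},x_{2,0},x_{2,1},x_{3,0},x_{3,1}]$ ($K$ algebraically closed, characteristic zero) trigraded by $\deg x_{i,j}=\mathbf e_i$, coordinate ring of $\mathbb{P}^1\times\mathbb{P}^1\times\mathbb{P}^1$. A variety of lines is written $X= \bigcup_{(i,j)\in U_3(X)} \mathcal{L}(A_i,B_j)\cup\bigcup_{(i,k)\in U_2(X)} \mathcal{L}(A_i,C_k)\cup \bigcup_{(j,k)\in U_1(X)} \mathcal{L}(B_j,C_k)$, where $\mathcal L(A_1),\ldots,\mathcal L(A_{d_1})$, $\mathcal L(B_1),\ldots,\mathcal L(B_{d_2})$, $\mathcal L(C_1),\ldots,\mathcal L(C_{d_3})$ are the distinct hyperplanes containing some line of $X$, defined by linear forms of degrees $(1,0,0),(0,1,0),(0,0,1)$ respectively, $\mathcal L(F,G)$ is the line defined by $(F,G)$, $U_3(X)\subseteq[d_1]\times[d_2]$, $U_2(X)\subseteq[d_1]\times[d_3]$, $U_1(X)\subseteq[d_2]\times[d_3]$, $[n]=\{1,\dots,n\}$. $U_h(X)$ resembles a Ferrers diagram if after permuting each of its two index sets it becomes a set $U$ with: $(u,v)\in U\Rightarrow (u',v')\in U$ for all $1\le u'\le u$, $1\le v'\le v$. For $P_{ijk}=\mathcal L(A_i)\cap\mathcal L(B_j)\cap\mathcal L(C_k)$, the multiplicity $\mu_{ijk}$ is the number of lines of $X$ passing through $P_{ijk}$ (equivalently the number of the lines $\mathcal L(A_i,B_j),\mathcal L(A_i,C_k),\mathcal L(B_j,C_k)$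 that belong to $X$). $X$ has the $Hyp_6(\star)$-property if for any $6$ hyperplanes $H_1,\ldots,H_6$ (each defined by a linear form of degree some $\mathbf e_i$) such that $\mathcal{L}(H_i,H_j)$ is a line of $X$ for all $j\neq i-1,i,i+1$ (indices modulo $6$), there is $u$ with $\mathcal{L}(H_u,H_{u+1})$ a line of $X$. *)

theory Defs
  imports "HOL-Computational_Algebra.Polynomial"
begin

text \<open>Points of P^1 x P^1 x P^1: a point is given by homogeneous coordinates
  p t = (x_{t,0}, x_{t,1}) for t = 1,2,3, each nonzero (the other indices are set to 0).
  Zero sets of multihomogeneous forms are invariant under rescaling each factor,
  so sets of representatives faithfully represent subvarieties.\<close>

type_synonym 'k pt = "nat \<Rightarrow> 'k \<times> 'k"

definition points :: "'k::field pt set" where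
  "points = {p. (\<forall>t\<in>{1,2,3}. p t \<noteq> (0,0)) \<and> (\<forall>t. t \<notin> {1,2,3} \<longrightarrow> p t = (0,0))}"

text \<open>A linear form of degree e_t: (t, (a,b)) stands for a x_{t,0} + b x_{t,1}, (a,b) nonzero.\<close>

type_synonym 'k lform = "nat \<times> ('k \<times> 'k)"

definition is_lform :: "'k::field lform \<Rightarrow> bool" where
  "is_lform F \<longleftrightarrow> fst F \<in> {1,2,3} \<and> snd F \<noteq> (0,0)"

definition eval_lform :: "'k::field lform \<Rightarrow> 'k pt \<Rightarrow> 'k" where
  "eval_lform F p = fst (snd F) * fst (p (fst F)) + snd (snd F) * snd (p (fst F))"

definition hyp :: "'k::field lform \<Rightarrow> 'k pt set" where
  "hyp F = {p \<in> points. eval_lform F p = 0}"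

definition lin :: "'k::field lform \<Rightarrow> 'k lform \<Rightarrow> 'k pt set" where
  "lin F G = hyp F \<inter> hyp G"

definition formA :: "(nat \<Rightarrow> 'k \<times> 'k) \<Rightarrow> nat \<Rightarrow> 'k lform" where "formA A i = (1, A i)"
definition formB :: "(nat \<Rightarrow> 'k \<times> 'k) \<Rightarrow> nat \<Rightarrow> 'k lform" where "formB B j = (2, B j)"
definition formC :: "(nat \<Rightarrow> 'k \<times> 'k) \<Rightarrow> nat \<Rightarrow> 'k lform" where "formC C k = (3, C k)"

definition variety_of_lines ::
  "(nat \<Rightarrow> 'k::field \<times> 'k) \<Rightarrow> (nat \<Rightarrow> 'k \<times> 'k) \<Rightarrow> (nat \<Rightarrow> 'k \<times> 'k)
   \<Rightarrow> nat \<Rightarrow> nat \<Rightarrow> nat \<Rightarrow> (nat \<times> nat) set \<Rightarrow> (nat \<times> nat) set \<Rightarrow> (nat \<times> nat) set \<Rightarrow> bool" where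
  "variety_of_lines A B C d1 d2 d3 U3 U2 U1 \<longleftrightarrow>
     U3 \<subseteq> {1..d1} \<times> {1..d2} \<and> U2 \<subseteq> {1..d1} \<times> {1..d3} \<and> U1 \<subseteq> {1..d2} \<times> {1..d3} \<and>
     (\<forall>i\<in>{1..d1}. A i \<noteq> (0,0)) \<and> (\<forall>j\<in>{1..d2}. B j \<noteq> (0,0)) \<and> (\<forall>k\<in>{1..d3}. C k \<noteq> (0,0)) \<and>
     \<comment> \<open>the hyperplanes are distinct\<close>
     inj_on (\<lambda>i. hyp (formA A i)) {1..d1} \<and>
     inj_on (\<lambda>j. hyp (formB B j)) {1..d2} \<and>
     inj_on (\<lambda>k. hyp (formC C k)) {1..d3} \<and>
     \<comment> \<open>each of them contains some line of X\<close>
     (\<forall>i\<in>{1..d1}. (\<exists>j. (i,j) \<in> U3) \<or> (\<exists>k. (i,k) \<in> U2)) \<and>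
     (\<forall>j\<in>{1..d2}. (\<exists>i. (i,j) \<in> U3) \<or> (\<exists>k. (j,k) \<in> U1)) \<and>
     (\<forall>k\<in>{1..d3}. (\<exists>i. (i,k) \<in> U2) \<or> (\<exists>j. (j,k) \<in> U1))"

definition lines_of ::
  "(nat \<Rightarrow> 'k::field \<times> 'k) \<Rightarrow> (nat \<Rightarrow> 'k \<times> 'k) \<Rightarrow> (nat \<Rightarrow> 'k \<times> 'k)
   \<Rightarrow> (nat \<times> nat) set \<Rightarrow> (nat \<times> nat) set \<Rightarrow> (nat \<times> nat) set \<Rightarrow> 'k pt set set" where
  "lines_of A B C U3 U2 U1 =
     (\<lambda>(i,j). lin (formA A i) (formB B j)) ` U3 \<union>
     (\<lambda>(i,k). lin (formA A i) (formC C k)) ` U2 \<union>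
     (\<lambda>(j,k). lin (formB B j) (formC C k)) ` U1"

text \<open>L(F,G) is a line of X: F, G have different degrees (so L(F,G) is a line) and it is
  one of the lines of X.\<close>
definition is_line_of ::
  "(nat \<Rightarrow> 'k::field \<times> 'k) \<Rightarrow> (nat \<Rightarrow> 'k \<times> 'k) \<Rightarrow> (nat \<Rightarrow> 'k \<times> 'k)
   \<Rightarrow> (nat \<times> nat) set \<Rightarrow> (nat \<times> nat) set \<Rightarrow> (nat \<times> nat) set \<Rightarrow> 'k lform \<Rightarrow> 'k lform \<Rightarrow> bool" where
  "is_line_of A B C U3 U2 U1 F G \<longleftrightarrow>
     fst F \<noteq> fst G \<and> lin F G \<in> lines_of A B C U3 U2 U1"

text \<open>Hyp_6(star)-property; indices of H_1..H_6 are 0..5 taken modulo 6.\<close>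
definition hyp6_star ::
  "(nat \<Rightarrow> 'k::field \<times> 'k) \<Rightarrow> (nat \<Rightarrow> 'k \<times> 'k) \<Rightarrow> (nat \<Rightarrow> 'k \<times> 'k)
   \<Rightarrow> (nat \<times> nat) set \<Rightarrow> (nat \<times> nat) set \<Rightarrow> (nat \<times> nat) set \<Rightarrow> bool" where
  "hyp6_star A B C U3 U2 U1 \<longleftrightarrow>
     (\<forall>H :: nat \<Rightarrow> 'k lform.
        (\<forall>i<6. is_lform (H i)) \<and>
        (\<forall>i<6. \<forall>j<6. j \<noteq> i \<and> j \<noteq> (i + 1) mod 6 \<and> j \<noteq> (i + 5) mod 6 \<longrightarrow>
            is_line_of A B C U3 U2 U1 (H i) (H j))
        \<longrightarrow> (\<exists>u<6. is_line_of A B C U3 U2 U1 (H u) (H ((u + 1) mod 6))))"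

definition resembles_ferrers :: "(nat \<times> nat) set \<Rightarrow> nat \<Rightarrow> nat \<Rightarrow> bool" where
  "resembles_ferrers U m n \<longleftrightarrow>
     (\<exists>\<sigma> \<tau>. bij_betw \<sigma> {1..m} {1..m} \<and> bij_betw \<tau> {1..n} {1..n} \<and>
        (let V = (\<lambda>(u,v). (\<sigma> u, \<tau> v)) ` U in
          \<forall>(u,v)\<in>V. \<forall>u'\<in>{1..u}. \<forall>v'\<in>{1..v}. (u',v') \<in> V))"

definition mu :: "(nat \<times> nat) set \<Rightarrow> (nat \<times> nat) set \<Rightarrow> (nat \<times> nat) set \<Rightarrow> nat \<Rightarrow> nat \<Rightarrow> nat \<Rightarrow> nat" where
  "mu U3 U2 U1 i j k =
     (if (i,j) \<in> U3 then 1 else 0) + (if (i,k) \<in> U2 then 1 else 0) + (if (j,k) \<in> U1 then 1 else 0)"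

end

theory Submission
  imports Defs
begin


definition mkpt :: "(nat \<Rightarrow> 'k::field \<times> 'k) \<Rightarrow> 'k pt" where
  "mkpt f = (\<lambda>i. if i \<in> {1,2,3} then f i else (0,0))"

lemma mkpt_points: "(\<And>t. t \<in> {1,2,3} \<Longrightarrow> f t \<noteq> (0,0)) \<Longrightarrow> mkpt f \<in> points"
  unfolding mkpt_def points_def by auto

definition zp :: "'k::field \<times> 'k \<Rightarrow> 'k \<times> 'k" where "zp w = (snd w, - fst w)"
definition opp :: "'k::field \<times> 'k \<Rightarrow> 'k \<times> 'k" where "opp w = (if fst w \<noteq> 0 then (1,0) else (0,1))"

lemma zp_nz: "w \<noteq> (0,0) \<Longrightarrow> zp w \<noteq> (0,0)" by (cases w) (auto simp: zp_def)
lemma opp_nz: "opp w \<noteq> (0,0)" by (auto simp: opp_def)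
lemma zp_ev: "fst w * fst (zp w) + snd w * snd (zp w) = 0" by (simp add: zp_def mult.commute)
lemma opp_ev: "w \<noteq> (0,0) \<Longrightarrow> fst w * fst (opp w) + snd w * snd (opp w) \<noteq> 0"
  by (cases w) (auto simp: opp_def)

lemma eval_mkpt: "fst F \<in> {1,2,3} \<Longrightarrow> eval_lform F (mkpt f) = fst (snd F) * fst (f (fst F)) + snd (snd F) * snd (f (fst F))"
  by (simp add: eval_lform_def mkpt_def)

lemma L0:
  assumes "is_lform F" "is_lform G" "hyp F \<subseteq> hyp G" shows "fst F = fst G"
proof (rule ccontr)
  assume ne: "fst F \<noteq> fst G"
  define p where "p = mkpt (\<lambda>i. if i = fst F then zp (snd F) else if i = fst G then opp (snd G) else (1,0))"
  have pp: "p \<in> points" unfolding p_def using assms(1,2) ne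
    by (intro mkpt_points) (auto simp: is_lform_def zp_nz opp_nz)
  have "p \<in> hyp F" using pp assms(1) unfolding hyp_def p_def
    by (auto simp: eval_mkpt is_lform_def zp_ev)
  moreover have "p \<notin> hyp G" using pp assms(2) ne unfolding hyp_def p_def
    by (auto simp: eval_mkpt is_lform_def opp_ev)
  ultimately show False using assms(3) by auto
qed

lemma prop_lem1:
  fixes a b c d :: "'k::field"
  assumes "(a,b) \<noteq> (0,0)" "c*b = d*a" "a*x+b*y = 0"
  shows "c*x+d*y = 0"
proof -
  have e1: "a*(c*x+d*y) = c*(a*x+b*y) + y*(a*d - c*b)" by (simp add: algebra_simps)
  have e2: "b*(c*x+d*y) = d*(a*x+b*y) + x*(b*c - a*d)" by (simp add: algebra_simps)
  have z1: "a*d - c*b = 0" using assms(2) by (simp add: mult.commute)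
  have z2: "b*c - a*d = 0" using assms(2) by (simp add: mult.commute)
  have "a*(c*x+d*y) = 0" using e1 z1 assms(3) by simp
  moreover have "b*(c*x+d*y) = 0" using e2 z2 assms(3) by simp
  ultimately show ?thesis using assms(1) by auto
qed

lemma prop_lem:
  fixes a b c d :: "'k::field"
  assumes "(a,b) \<noteq> (0,0)" "(c,d) \<noteq> (0,0)" "c*b = d*a"
  shows "a*x+b*y = 0 \<longleftrightarrow> c*x+d*y = 0"
proof
  assume "a*x+b*y = 0" then show "c*x+d*y = 0" using prop_lem1[OF assms(1,3)] by blast
next
  assume h: "c*x+d*y = 0"
  have "a*d = b*c" using assms(3) by (simp add: mult.commute)
  then show "a*x+b*y = 0" using prop_lem1[OF assms(2) _ h, of a b] by blast
qed

lemma hyp_eqI: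
  assumes "is_lform F" "is_lform H" "fst H = fst F"
    and "fst (snd H) * snd (snd F) = snd (snd H) * fst (snd F)"
  shows "hyp H = hyp F"
proof -
  have "\<And>x y. fst (snd F)*x + snd (snd F)*y = 0 \<longleftrightarrow> fst (snd H)*x + snd (snd H)*y = 0"
    using assms by (intro prop_lem) (auto simp: is_lform_def)
  then show ?thesis using assms(3) unfolding hyp_def eval_lform_def by auto
qed

lemma L1a:
  assumes F: "is_lform F" and G: "is_lform G" and H: "is_lform H" and ne: "fst F \<noteq> fst G"
    and sub: "lin F G \<subseteq> hyp H" and eq: "fst H = fst F"
  shows "hyp H = hyp F"
proof -
  define p where "p = mkpt (\<lambda>i. if i = fst F then zp (snd F) else if i = fst G then zp (snd G) else (1,0))"
  have pp: "p \<in> points" unfolding p_def using F G ne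
    by (intro mkpt_points) (auto simp: is_lform_def zp_nz)
  have "p \<in> lin F G" using pp F G ne unfolding lin_def hyp_def p_def
    by (auto simp: eval_mkpt is_lform_def zp_ev)
  then have "p \<in> hyp H" using sub by auto
  then have "eval_lform H p = 0" unfolding hyp_def by auto
  then have "fst (snd H) * snd (snd F) + snd (snd H) * (- fst (snd F)) = 0"
    using H eq unfolding p_def by (simp add: eval_mkpt is_lform_def zp_def)
  then have "fst (snd H) * snd (snd F) = snd (snd H) * fst (snd F)"
    by (simp add: algebra_simps)
  then show ?thesis using hyp_eqI F H eq by blast
qed

lemma lin_sym: "lin F G = lin G F" unfolding lin_def by auto

lemma L1:
  assumes F: "is_lform F" and G: "is_lform G" and H: "is_lform H" and ne: "fst F \<noteq> fst G"
    and sub: "lin F G \<subseteq> hyp H"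
  shows "hyp H = hyp F \<or> hyp H = hyp G"
proof (cases "fst H = fst F \<or> fst H = fst G")
  case True
  then show ?thesis using L1a[OF F G H ne sub] L1a[OF G F H _ , of ] ne sub lin_sym[of F G] by auto
next
  case False
  define p where "p = mkpt (\<lambda>i. if i = fst F then zp (snd F) else if i = fst G then zp (snd G)
     else if i = fst H then opp (snd H) else (1,0))"
  have pp: "p \<in> points" unfolding p_def using F G H ne
    by (intro mkpt_points) (auto simp: is_lform_def zp_nz opp_nz)
  have "p \<in> lin F G" using pp F G ne unfolding lin_def hyp_def p_def
    by (auto simp: eval_mkpt is_lform_def zp_ev)
  moreover have "p \<notin> hyp H" using pp H False unfolding hyp_def p_def
    by (auto simp: eval_mkpt is_lform_def opp_ev)
  ultimately show ?thesis using sub by auto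
qed

lemma L2:
  assumes F: "is_lform F" and G: "is_lform G" and F': "is_lform F'" and G': "is_lform G'"
    and ne: "fst F \<noteq> fst G" and ne': "fst F' \<noteq> fst G'" and eq: "lin F G = lin F' G'"
  shows "(hyp F' = hyp F \<and> hyp G' = hyp G) \<or> (hyp F' = hyp G \<and> hyp G' = hyp F)"
proof -
  have a: "hyp F' = hyp F \<or> hyp F' = hyp G"
    using L1[OF F G F' ne] eq unfolding lin_def by auto
  have b: "hyp G' = hyp F \<or> hyp G' = hyp G"
    using L1[OF F G G' ne] eq unfolding lin_def by auto
  have c: "hyp F' \<noteq> hyp G'" using L0[OF F' G'] ne' by auto
  from a b c show ?thesis by auto
qed



locale vl =
  fixes A B C :: "nat \<Rightarrow> 'k::field \<times> 'k" and d1 d2 d3 :: nat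
    and U3 U2 U1 :: "(nat \<times> nat) set"
  assumes V: "variety_of_lines A B C d1 d2 d3 U3 U2 U1"
begin

definition coef :: "nat \<times> nat \<Rightarrow> 'k \<times> 'k" where
  "coef v = (if fst v = 1 then A (snd v) else if fst v = 2 then B (snd v) else C (snd v))"
definition vf :: "nat \<times> nat \<Rightarrow> 'k lform" where "vf v = (fst v, coef v)"
definition valid :: "nat \<times> nat \<Rightarrow> bool" where
  "valid v \<longleftrightarrow> (fst v = 1 \<and> snd v \<in> {1..d1}) \<or> (fst v = 2 \<and> snd v \<in> {1..d2}) \<or> (fst v = 3 \<and> snd v \<in> {1..d3})"
definition E :: "nat \<times> nat \<Rightarrow> nat \<times> nat \<Rightarrow> bool" where
  "E v w \<longleftrightarrow> (fst v = 1 \<and> fst w = 2 \<and> (snd v, snd w) \<in> U3) \<or> (fst v = 2 \<and> fst w = 1 \<and> (snd w, snd v) \<in> U3)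
    \<or> (fst v = 1 \<and> fst w = 3 \<and> (snd v, snd w) \<in> U2) \<or> (fst v = 3 \<and> fst w = 1 \<and> (snd w, snd v) \<in> U2)
    \<or> (fst v = 2 \<and> fst w = 3 \<and> (snd v, snd w) \<in> U1) \<or> (fst v = 3 \<and> fst w = 2 \<and> (snd w, snd v) \<in> U1)"

lemma E_sym: "E v w \<Longrightarrow> E w v" unfolding E_def by auto
lemma E_fst: "E v w \<Longrightarrow> fst v \<noteq> fst w" unfolding E_def by auto
lemma Usub: "U3 \<subseteq> {1..d1} \<times> {1..d2}" "U2 \<subseteq> {1..d1} \<times> {1..d3}" "U1 \<subseteq> {1..d2} \<times> {1..d3}"
  using V unfolding variety_of_lines_def by blast+
lemma ABCnz: "\<forall>i\<in>{1..d1}. A i \<noteq> (0,0)" "\<forall>j\<in>{1..d2}. B j \<noteq> (0,0)" "\<forall>k\<in>{1..d3}. C k \<noteq> (0,0)"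
  using V unfolding variety_of_lines_def by blast+
lemma E_valid: "E v w \<Longrightarrow> valid v \<and> valid w"
  using Usub unfolding E_def valid_def by blast

lemma valid_lform: "valid v \<Longrightarrow> is_lform (vf v)"
  using ABCnz unfolding valid_def vf_def coef_def is_lform_def by auto

lemma fst_vf[simp]: "fst (vf v) = fst v" by (simp add: vf_def)

lemma lines_of_eq: "lines_of A B C U3 U2 U1 = {lin (vf v) (vf w) | v w. E v w}"
proof
  show "lines_of A B C U3 U2 U1 \<subseteq> {lin (vf v) (vf w) | v w. E v w}"
  proof
    fix L assume "L \<in> lines_of A B C U3 U2 U1"
    then consider (a) i j where "(i,j) \<in> U3" "L = lin (formA A i) (formB B j)"
      | (b) i k where "(i,k) \<in> U2" "L = lin (formA A i) (formC C k)"
      | (c) j k where "(j,k) \<in> U1" "L = lin (formB B j) (formC C k)"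
      unfolding lines_of_def by auto
    then show "L \<in> {lin (vf v) (vf w) | v w. E v w}"
    proof cases
      case a
      then have "L = lin (vf (1,i)) (vf (2,j))" "E (1,i) (2,j)"
        by (auto simp: vf_def coef_def formA_def formB_def E_def)
      then show ?thesis by blast
    next
      case b
      then have "L = lin (vf (1,i)) (vf (3,k))" "E (1,i) (3,k)"
        by (auto simp: vf_def coef_def formA_def formC_def E_def)
      then show ?thesis by blast
    next
      case c
      then have "L = lin (vf (2,j)) (vf (3,k))" "E (2,j) (3,k)"
        by (auto simp: vf_def coef_def formB_def formC_def E_def)
      then show ?thesis by blast
    qed
  qed
next
  show "{lin (vf v) (vf w) | v w. E v w} \<subseteq> lines_of A B C U3 U2 U1"
  proof
    fix L assume "L \<in> {lin (vf v) (vf w) | v w. E v w}"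
    then obtain v w where L: "L = lin (vf v) (vf w)" and e: "E v w" by blast
    obtain t n t' n' where vw: "v = (t,n)" "w = (t',n')" by fastforce
    have vA: "vf (1,i) = formA A i" and vB: "vf (2,j) = formB B j" and vC: "vf (3,k) = formC C k" for i j k
      by (auto simp: vf_def coef_def formA_def formB_def formC_def)
    from e consider "t = 1" "t' = 2" "(n,n') \<in> U3" | "t = 2" "t' = 1" "(n',n) \<in> U3"
      | "t = 1" "t' = 3" "(n,n') \<in> U2" | "t = 3" "t' = 1" "(n',n) \<in> U2"
      | "t = 2" "t' = 3" "(n,n') \<in> U1" | "t = 3" "t' = 2" "(n',n) \<in> U1"
      unfolding vw E_def by auto
    then show "L \<in> lines_of A B C U3 U2 U1"
    proof cases
      case 1
      then have "lin (formA A n) (formB B n') \<in> (\<lambda>(i,j). lin (formA A i) (formB B j)) ` U3"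
        by (intro rev_image_eqI[of "(n,n')"]) simp_all
      moreover have "L = lin (formA A n) (formB B n')" using L vA vB 1 unfolding vw by simp
      ultimately show ?thesis unfolding lines_of_def by blast
    next
      case 2
      then have "lin (formA A n') (formB B n) \<in> (\<lambda>(i,j). lin (formA A i) (formB B j)) ` U3"
        by (intro rev_image_eqI[of "(n',n)"]) simp_all
      moreover have "L = lin (formA A n') (formB B n)" using L vA vB lin_sym[of "formB B n"] 2 unfolding vw by simp
      ultimately show ?thesis unfolding lines_of_def by blast
    next
      case 3
      then have "lin (formA A n) (formC C n') \<in> (\<lambda>(i,k). lin (formA A i) (formC C k)) ` U2"
        by (intro rev_image_eqI[of "(n,n')"]) simp_all
      moreover have "L = lin (formA A n) (formC C n')" using L vA vC 3 unfolding vw by simp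
      ultimately show ?thesis unfolding lines_of_def by blast
    next
      case 4
      then have "lin (formA A n') (formC C n) \<in> (\<lambda>(i,k). lin (formA A i) (formC C k)) ` U2"
        by (intro rev_image_eqI[of "(n',n)"]) simp_all
      moreover have "L = lin (formA A n') (formC C n)" using L vA vC lin_sym[of "formC C n"] 4 unfolding vw by simp
      ultimately show ?thesis unfolding lines_of_def by blast
    next
      case 5
      then have "lin (formB B n) (formC C n') \<in> (\<lambda>(j,k). lin (formB B j) (formC C k)) ` U1"
        by (intro rev_image_eqI[of "(n,n')"]) simp_all
      moreover have "L = lin (formB B n) (formC C n')" using L vB vC 5 unfolding vw by simp
      ultimately show ?thesis unfolding lines_of_def by blast
    next
      case 6
      then have "lin (formB B n') (formC C n) \<in> (\<lambda>(j,k). lin (formB B j) (formC C k)) ` U1"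
        by (intro rev_image_eqI[of "(n',n)"]) simp_all
      moreover have "L = lin (formB B n') (formC C n)" using L vB vC lin_sym[of "formC C n"] 6 unfolding vw by simp
      ultimately show ?thesis unfolding lines_of_def by blast
    qed
  qed
qed

lemma uniq: "valid v \<Longrightarrow> valid v' \<Longrightarrow> hyp (vf v) = hyp (vf v') \<Longrightarrow> v = v'"
proof -
  assume a: "valid v" "valid v'" "hyp (vf v) = hyp (vf v')"
  have f: "fst v = fst v'" using L0[OF valid_lform[OF a(1)] valid_lform[OF a(2)]] a(3) by simp
  have inj: "inj_on (\<lambda>i. hyp (formA A i)) {1..d1}" "inj_on (\<lambda>j. hyp (formB B j)) {1..d2}"
     "inj_on (\<lambda>k. hyp (formC C k)) {1..d3}" using V unfolding variety_of_lines_def by auto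
  obtain t n n' where vw: "v = (t,n)" "v' = (t,n')" using f by (metis prod.collapse)
  have vA: "vf (1,i) = formA A i" and vB: "vf (2,j) = formB B j" and vC: "vf (3,k) = formC C k" for i j k
      by (auto simp: vf_def coef_def formA_def formB_def formC_def)
  from a(1) consider "t = 1" "n \<in> {1..d1}" "n' \<in> {1..d1}" | "t = 2" "n \<in> {1..d2}" "n' \<in> {1..d2}"
    | "t = 3" "n \<in> {1..d3}" "n' \<in> {1..d3}" using a(2) unfolding vw valid_def by auto
  then show "v = v'"
  proof cases
    case 1 then show ?thesis using a(3) inj(1) vA unfolding vw by (metis inj_onD)
  next
    case 2 then show ?thesis using a(3) inj(2) vB unfolding vw by (metis inj_onD)
  next
    case 3 then show ?thesis using a(3) inj(3) vC unfolding vw by (metis inj_onD)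
  qed
qed

lemma B1:
  assumes F: "is_lform F" and G: "is_lform G"
  shows "is_line_of A B C U3 U2 U1 F G \<longleftrightarrow>
     (\<exists>v w. E v w \<and> hyp F = hyp (vf v) \<and> hyp G = hyp (vf w))"
proof
  assume "is_line_of A B C U3 U2 U1 F G"
  then obtain v w where ne: "fst F \<noteq> fst G" and e: "E v w" and l: "lin F G = lin (vf v) (vf w)"
    unfolding is_line_of_def lines_of_eq by auto
  have vv: "valid v" "valid w" using E_valid[OF e] by auto
  from L2[OF valid_lform[OF vv(1)] valid_lform[OF vv(2)] F G _ ne] l E_fst[OF e]
  have "(hyp F = hyp (vf v) \<and> hyp G = hyp (vf w)) \<or> (hyp F = hyp (vf w) \<and> hyp G = hyp (vf v))"
    by auto
  then show "\<exists>v w. E v w \<and> hyp F = hyp (vf v) \<and> hyp G = hyp (vf w)"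
    using e E_sym by blast
next
  assume "\<exists>v w. E v w \<and> hyp F = hyp (vf v) \<and> hyp G = hyp (vf w)"
  then obtain v w where e: "E v w" and h: "hyp F = hyp (vf v)" "hyp G = hyp (vf w)" by blast
  have vv: "valid v" "valid w" using E_valid[OF e] by auto
  have "fst F = fst v" using L0[OF F valid_lform[OF vv(1)]] h by simp
  moreover have "fst G = fst w" using L0[OF G valid_lform[OF vv(2)]] h by simp
  ultimately have "fst F \<noteq> fst G" using E_fst[OF e] by simp
  moreover have "lin F G = lin (vf v) (vf w)" using h unfolding lin_def by simp
  ultimately show "is_line_of A B C U3 U2 U1 F G"
    unfolding is_line_of_def lines_of_eq using e by blast
qed

lemma line_vf: "valid v \<Longrightarrow> valid w \<Longrightarrow> is_line_of A B C U3 U2 U1 (vf v) (vf w) \<longleftrightarrow> E v w"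
  using B1[OF valid_lform valid_lform] uniq E_valid by metis

lemma line_vertex:
  assumes "is_lform F" "is_lform G" "is_line_of A B C U3 U2 U1 F G"
  shows "\<exists>v. valid v \<and> hyp F = hyp (vf v)"
  using B1[OF assms(1,2)] assms(3) E_valid by blast

lemma line_E:
  assumes "is_lform F" "is_lform G" "valid v" "valid w" "hyp F = hyp (vf v)" "hyp G = hyp (vf w)"
  shows "is_line_of A B C U3 U2 U1 F G \<longleftrightarrow> E v w"
proof
  assume "is_line_of A B C U3 U2 U1 F G"
  then obtain v' w' where "E v' w'" "hyp F = hyp (vf v')" "hyp G = hyp (vf w')"
    using B1[OF assms(1,2)] by blast
  then show "E v w" using uniq E_valid assms by metis
next
  assume "E v w" then show "is_line_of A B C U3 U2 U1 F G" using B1[OF assms(1,2)] assms by blast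
qed

end


lemma tri:
  fixes x y z :: nat
  assumes "x \<in> {1,2,3}" "y \<in> {1,2,3}" "z \<in> {1,2,3}" "x \<noteq> y" "x \<noteq> z" "y \<noteq> z"
  shows "(x=1\<and>y=2\<and>z=3) \<or> (x=1\<and>y=3\<and>z=2) \<or> (x=2\<and>y=1\<and>z=3) \<or> (x=2\<and>y=3\<and>z=1) \<or> (x=3\<and>y=1\<and>z=2) \<or> (x=3\<and>y=2\<and>z=1)"
  using assms by auto
lemma pat6:
  fixes t0 t1 t2 t3 t4 t5 :: nat
  assumes "t0 \<in> {1,2,3}" "t1 \<in> {1,2,3}" "t2 \<in> {1,2,3}" "t3 \<in> {1,2,3}" "t4 \<in> {1,2,3}" "t5 \<in> {1,2,3}"
   "t0 \<noteq> t2" "t0 \<noteq> t3" "t0 \<noteq> t4" "t1 \<noteq> t3" "t1 \<noteq> t4" "t1 \<noteq> t5" "t2 \<noteq> t4" "t2 \<noteq> t5" "t3 \<noteq> t5"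
  shows "(t0 = 1 \<and> t1 = 1 \<and> t2 = 2 \<and> t3 = 2 \<and> t4 = 3 \<and> t5 = 3) \<or>
    (t0 = 1 \<and> t1 = 1 \<and> t2 = 3 \<and> t3 = 3 \<and> t4 = 2 \<and> t5 = 2) \<or>
    (t0 = 2 \<and> t1 = 2 \<and> t2 = 1 \<and> t3 = 1 \<and> t4 = 3 \<and> t5 = 3) \<or>
    (t0 = 2 \<and> t1 = 2 \<and> t2 = 3 \<and> t3 = 3 \<and> t4 = 1 \<and> t5 = 1) \<or>
    (t0 = 3 \<and> t1 = 3 \<and> t2 = 1 \<and> t3 = 1 \<and> t4 = 2 \<and> t5 = 2) \<or>
    (t0 = 3 \<and> t1 = 3 \<and> t2 = 2 \<and> t3 = 2 \<and> t4 = 1 \<and> t5 = 1) \<or>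
    (t0 = 1 \<and> t1 = 2 \<and> t2 = 2 \<and> t3 = 3 \<and> t4 = 3 \<and> t5 = 1) \<or>
    (t0 = 1 \<and> t1 = 3 \<and> t2 = 3 \<and> t3 = 2 \<and> t4 = 2 \<and> t5 = 1) \<or>
    (t0 = 2 \<and> t1 = 1 \<and> t2 = 1 \<and> t3 = 3 \<and> t4 = 3 \<and> t5 = 2) \<or>
    (t0 = 2 \<and> t1 = 3 \<and> t2 = 3 \<and> t3 = 1 \<and> t4 = 1 \<and> t5 = 2) \<or>
    (t0 = 3 \<and> t1 = 1 \<and> t2 = 1 \<and> t3 = 2 \<and> t4 = 2 \<and> t5 = 3) \<or>
    (t0 = 3 \<and> t1 = 2 \<and> t2 = 2 \<and> t3 = 1 \<and> t4 = 1 \<and> t5 = 3)"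
proof -
  have "(t0=1\<and>t2=2\<and>t4=3) \<or> (t0=1\<and>t2=3\<and>t4=2) \<or> (t0=2\<and>t2=1\<and>t4=3) \<or> (t0=2\<and>t2=3\<and>t4=1) \<or> (t0=3\<and>t2=1\<and>t4=2) \<or> (t0=3\<and>t2=2\<and>t4=1)"
    using tri[of t0 t2 t4] assms by blast
  then show ?thesis using assms(2,4,6,8-) by (elim disjE) auto
qed


context vl begin

definition bad6 where
  "bad6 v0 v1 v2 v3 v4 v5 \<longleftrightarrow> E v0 v2 \<and> E v0 v3 \<and> E v0 v4 \<and> E v1 v3 \<and> E v1 v4 \<and> E v1 v5 \<and>
     E v2 v4 \<and> E v2 v5 \<and> E v3 v5 \<and> \<not> E v0 v1 \<and> \<not> E v1 v2 \<and> \<not> E v2 v3 \<and> \<not> E v3 v4 \<and>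
     \<not> E v4 v5 \<and> \<not> E v5 v0"

definition conf where
  "conf a1 a2 b1 b2 c1 c2 \<longleftrightarrow> (a1,b1) \<in> U3 \<and> (a1,c1) \<in> U2 \<and> (b1,c1) \<in> U1 \<and>
     (a2,b2) \<in> U3 \<and> (a2,c2) \<in> U2 \<and> (b2,c2) \<in> U1 \<and>
     (((a1,b2) \<in> U3 \<and> (a2,c1) \<in> U2 \<and> (b1,c2) \<in> U1 \<and> (a2,b1) \<notin> U3 \<and> (b2,c1) \<notin> U1 \<and> (a1,c2) \<notin> U2) \<or>
      ((a1,b2) \<notin> U3 \<and> (a2,c1) \<notin> U2 \<and> (b1,c2) \<notin> U1 \<and> (a2,b1) \<in> U3 \<and> (b2,c1) \<in> U1 \<and> (a1,c2) \<in> U2))"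

lemma E_t: "E v w \<Longrightarrow> fst v \<in> {1,2,3} \<and> fst w \<in> {1,2,3}" unfolding E_def by auto

lemma bad6_conf:
  assumes b: "bad6 (t0,n0) (t1,n1) (t2,n2) (t3,n3) (t4,n4) (t5,n5)"
  shows "conf n0 n1 n2 n3 n4 n5 \<or>
    conf n0 n1 n4 n5 n2 n3 \<or>
    conf n2 n3 n0 n1 n4 n5 \<or>
    conf n4 n5 n0 n1 n2 n3 \<or>
    conf n2 n3 n4 n5 n0 n1 \<or>
    conf n4 n5 n2 n3 n0 n1 \<or>
    conf n0 n5 n2 n1 n4 n3 \<or>
    conf n0 n5 n4 n3 n2 n1 \<or>
    conf n2 n1 n0 n5 n4 n3 \<or>
    conf n4 n3 n0 n5 n2 n1 \<or>
    conf n2 n1 n4 n3 n0 n5 \<or>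
    conf n4 n3 n2 n1 n0 n5"
proof -
  have e: "E (t0,n0) (t2,n2)" "E (t0,n0) (t3,n3)" "E (t0,n0) (t4,n4)" "E (t1,n1) (t3,n3)"
    "E (t1,n1) (t4,n4)" "E (t1,n1) (t5,n5)" "E (t2,n2) (t4,n4)" "E (t2,n2) (t5,n5)" "E (t3,n3) (t5,n5)"
    and ne: "\<not> E (t0,n0) (t1,n1)" "\<not> E (t1,n1) (t2,n2)" "\<not> E (t2,n2) (t3,n3)" "\<not> E (t3,n3) (t4,n4)"
    "\<not> E (t4,n4) (t5,n5)" "\<not> E (t5,n5) (t0,n0)"
    using b unfolding bad6_def by auto
  have "(t0 = 1 \<and> t1 = 1 \<and> t2 = 2 \<and> t3 = 2 \<and> t4 = 3 \<and> t5 = 3) \<or>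
    (t0 = 1 \<and> t1 = 1 \<and> t2 = 3 \<and> t3 = 3 \<and> t4 = 2 \<and> t5 = 2) \<or>
    (t0 = 2 \<and> t1 = 2 \<and> t2 = 1 \<and> t3 = 1 \<and> t4 = 3 \<and> t5 = 3) \<or>
    (t0 = 2 \<and> t1 = 2 \<and> t2 = 3 \<and> t3 = 3 \<and> t4 = 1 \<and> t5 = 1) \<or>
    (t0 = 3 \<and> t1 = 3 \<and> t2 = 1 \<and> t3 = 1 \<and> t4 = 2 \<and> t5 = 2) \<or>
    (t0 = 3 \<and> t1 = 3 \<and> t2 = 2 \<and> t3 = 2 \<and> t4 = 1 \<and> t5 = 1) \<or>
    (t0 = 1 \<and> t1 = 2 \<and> t2 = 2 \<and> t3 = 3 \<and> t4 = 3 \<and> t5 = 1) \<or>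
    (t0 = 1 \<and> t1 = 3 \<and> t2 = 3 \<and> t3 = 2 \<and> t4 = 2 \<and> t5 = 1) \<or>
    (t0 = 2 \<and> t1 = 1 \<and> t2 = 1 \<and> t3 = 3 \<and> t4 = 3 \<and> t5 = 2) \<or>
    (t0 = 2 \<and> t1 = 3 \<and> t2 = 3 \<and> t3 = 1 \<and> t4 = 1 \<and> t5 = 2) \<or>
    (t0 = 3 \<and> t1 = 1 \<and> t2 = 1 \<and> t3 = 2 \<and> t4 = 2 \<and> t5 = 3) \<or>
    (t0 = 3 \<and> t1 = 2 \<and> t2 = 2 \<and> t3 = 1 \<and> t4 = 1 \<and> t5 = 3)"
    apply (rule pat6)
    using E_t[OF e(1)] E_t[OF e(4)] E_t[OF e(7)] E_t[OF e(8)] E_fst[OF e(1)] E_fst[OF e(2)] E_fst[OF e(3)]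
      E_fst[OF e(4)] E_fst[OF e(5)] E_fst[OF e(6)] E_fst[OF e(7)] E_fst[OF e(8)] E_fst[OF e(9)]
    by simp_all
  then show ?thesis
  proof (elim disjE)
  qed (insert e ne, simp_all add: E_def conf_def)
qed

lemma conf_bad6: "conf a1 a2 b1 b2 c1 c2 \<Longrightarrow>
   bad6 (1,a1) (1,a2) (2,b1) (2,b2) (3,c1) (3,c2) \<or> bad6 (1,a1) (1,a2) (3,c1) (3,c2) (2,b1) (2,b2)"
  unfolding conf_def by (elim conjE disjE) (simp_all add: bad6_def E_def)

end


lemma all6: "(\<forall>i<(6::nat). P i) \<longleftrightarrow> P 0 \<and> P 1 \<and> P 2 \<and> P 3 \<and> P 4 \<and> P 5"
proof
  assume "\<forall>i<6. P i" then show "P 0 \<and> P 1 \<and> P 2 \<and> P 3 \<and> P 4 \<and> P 5" by simp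
next
  assume h: "P 0 \<and> P 1 \<and> P 2 \<and> P 3 \<and> P 4 \<and> P 5"
  show "\<forall>i<6. P i"
  proof (intro allI impI)
    fix i :: nat assume "i < 6"
    then have "i = 0 \<or> i = 1 \<or> i = 2 \<or> i = 3 \<or> i = 4 \<or> i = 5" by auto
    then show "P i" using h by auto
  qed
qed

lemma ex6: "(\<exists>i<(6::nat). P i) \<longleftrightarrow> P 0 \<or> P 1 \<or> P 2 \<or> P 3 \<or> P 4 \<or> P 5"
  using all6[of "\<lambda>i. \<not> P i"] by blast

lemma mu3: "mu U3 U2 U1 i j k = 3 \<longleftrightarrow> (i,j) \<in> U3 \<and> (i,k) \<in> U2 \<and> (j,k) \<in> U1"
  unfolding mu_def by auto
lemma mu2: "mu U3 U2 U1 i j k = 2 \<longleftrightarrow> ((i,j) \<in> U3 \<and> (i,k) \<in> U2 \<and> (j,k) \<notin> U1) \<or>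
   ((i,j) \<in> U3 \<and> (i,k) \<notin> U2 \<and> (j,k) \<in> U1) \<or> ((i,j) \<notin> U3 \<and> (i,k) \<in> U2 \<and> (j,k) \<in> U1)"
  unfolding mu_def by auto

lemma two: "Suc (Suc 0) = 2" by simp

context vl begin

lemma mu_conf:
  "((mu U3 U2 U1 a1 b1 c1 = 3 \<and> mu U3 U2 U1 a1 b2 c1 = 2 \<and>
          mu U3 U2 U1 a2 b1 c1 = 2 \<and> mu U3 U2 U1 a2 b2 c1 = 2) \<and>
     (mu U3 U2 U1 a1 b1 c2 = 2 \<and> mu U3 U2 U1 a1 b2 c2 = 2 \<and>
          mu U3 U2 U1 a2 b1 c2 = 2 \<and> mu U3 U2 U1 a2 b2 c2 = 3)) \<longleftrightarrow> conf a1 a2 b1 b2 c1 c2"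
  unfolding mu3 mu2 conf_def by blast

lemma conf_range: "conf a1 a2 b1 b2 c1 c2 \<Longrightarrow>
   a1 \<in> {1..d1} \<and> a2 \<in> {1..d1} \<and> b1 \<in> {1..d2} \<and> b2 \<in> {1..d2} \<and> c1 \<in> {1..d3} \<and> c2 \<in> {1..d3}"
  using Usub unfolding conf_def by blast

abbreviation "LN \<equiv> is_line_of A B C U3 U2 U1"

lemma line_sym: "LN F G \<Longrightarrow> LN G F"
  unfolding is_line_of_def using lin_sym by metis

lemma hyp6_elim:
  fixes H :: "nat \<Rightarrow> 'k lform"
  assumes h: "hyp6_star A B C U3 U2 U1"
    and f: "is_lform (H 0)" "is_lform (H 1)" "is_lform (H 2)" "is_lform (H 3)" "is_lform (H 4)" "is_lform (H 5)"
    and l: "LN (H 0) (H 2)" "LN (H 0) (H 3)" "LN (H 0) (H 4)" "LN (H 1) (H 3)" "LN (H 1) (H 4)"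
      "LN (H 1) (H 5)" "LN (H 2) (H 4)" "LN (H 2) (H 5)" "LN (H 3) (H 5)"
    and n: "\<not> LN (H 0) (H 1)" "\<not> LN (H 1) (H 2)" "\<not> LN (H 2) (H 3)" "\<not> LN (H 3) (H 4)"
      "\<not> LN (H 4) (H 5)" "\<not> LN (H 5) (H 0)"
  shows False
proof -
  have imp: "(\<forall>i<6. is_lform (H i)) \<and>
        (\<forall>i<6. \<forall>j<6. j \<noteq> i \<and> j \<noteq> (i + 1) mod 6 \<and> j \<noteq> (i + 5) mod 6 \<longrightarrow> LN (H i) (H j))
        \<longrightarrow> (\<exists>u<6. LN (H u) (H ((u + 1) mod 6)))"
    using h unfolding hyp6_star_def by blast
  have a: "\<forall>i<6. is_lform (H i)" using f unfolding all6 by simp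
  have b: "\<forall>i<6. \<forall>j<6. j \<noteq> i \<and> j \<noteq> (i + 1) mod 6 \<and> j \<noteq> (i + 5) mod 6 \<longrightarrow> LN (H i) (H j)"
    using l line_sym[OF l(1)] line_sym[OF l(2)] line_sym[OF l(3)] line_sym[OF l(4)] line_sym[OF l(5)]
      line_sym[OF l(6)] line_sym[OF l(7)] line_sym[OF l(8)] line_sym[OF l(9)]
    unfolding all6 by (simp add: two)
  have c: "\<not> (\<exists>u<6. LN (H u) (H ((u + 1) mod 6)))"
    using n unfolding ex6 by (simp add: two)
  show False using imp a b c by blast
qed

lemma hyp6_intro:
  assumes "\<And>H :: nat \<Rightarrow> 'k lform. is_lform (H 0) \<Longrightarrow> is_lform (H 1) \<Longrightarrow> is_lform (H 2) \<Longrightarrow> is_lform (H 3) \<Longrightarrow> is_lform (H 4) \<Longrightarrow> is_lform (H 5) \<Longrightarrow>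
     LN (H 0) (H 2) \<Longrightarrow> LN (H 0) (H 3) \<Longrightarrow> LN (H 0) (H 4) \<Longrightarrow> LN (H 1) (H 3) \<Longrightarrow> LN (H 1) (H 4) \<Longrightarrow>
     LN (H 1) (H 5) \<Longrightarrow> LN (H 2) (H 4) \<Longrightarrow> LN (H 2) (H 5) \<Longrightarrow> LN (H 3) (H 5) \<Longrightarrow>
     \<not> LN (H 0) (H 1) \<Longrightarrow> \<not> LN (H 1) (H 2) \<Longrightarrow> \<not> LN (H 2) (H 3) \<Longrightarrow> \<not> LN (H 3) (H 4) \<Longrightarrow>
     \<not> LN (H 4) (H 5) \<Longrightarrow> \<not> LN (H 5) (H 0) \<Longrightarrow> False"
  shows "hyp6_star A B C U3 U2 U1"
  unfolding hyp6_star_def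
proof (intro allI impI)
  fix H :: "nat \<Rightarrow> 'k lform"
  assume h: "(\<forall>i<6. is_lform (H i)) \<and>
        (\<forall>i<6. \<forall>j<6. j \<noteq> i \<and> j \<noteq> (i + 1) mod 6 \<and> j \<noteq> (i + 5) mod 6 \<longrightarrow> LN (H i) (H j))"
  have a: "is_lform (H 0)" "is_lform (H 1)" "is_lform (H 2)" "is_lform (H 3)" "is_lform (H 4)" "is_lform (H 5)"
    using h unfolding all6 by auto
  have b: "LN (H 0) (H 2)" "LN (H 0) (H 3)" "LN (H 0) (H 4)" "LN (H 1) (H 3)" "LN (H 1) (H 4)"
      "LN (H 1) (H 5)" "LN (H 2) (H 4)" "LN (H 2) (H 5)" "LN (H 3) (H 5)"
    using h unfolding all6 by (simp_all add: two)
  show "\<exists>u<6. LN (H u) (H ((u + 1) mod 6))"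
  proof (rule ccontr)
    assume "\<not> (\<exists>u<6. LN (H u) (H ((u + 1) mod 6)))"
    then have c: "\<not> LN (H 0) (H 1)" "\<not> LN (H 1) (H 2)" "\<not> LN (H 2) (H 3)" "\<not> LN (H 3) (H 4)"
      "\<not> LN (H 4) (H 5)" "\<not> LN (H 5) (H 0)" unfolding ex6 by (simp_all add: two)
    show False using assms[OF a b c] .
  qed
qed

end


context vl begin

lemma bad6_not_hyp6:
  assumes b: "bad6 v0 v1 v2 v3 v4 v5" and h: "hyp6_star A B C U3 U2 U1"
  shows False
proof -
  have e: "E v0 v2" "E v0 v3" "E v0 v4" "E v1 v3" "E v1 v4" "E v1 v5" "E v2 v4" "E v2 v5" "E v3 v5"
    and ne: "\<not> E v0 v1" "\<not> E v1 v2" "\<not> E v2 v3" "\<not> E v3 v4" "\<not> E v4 v5" "\<not> E v5 v0"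
    using b unfolding bad6_def by auto
  have v: "valid v0" "valid v1" "valid v2" "valid v3" "valid v4" "valid v5"
    using E_valid[OF e(1)] E_valid[OF e(4)] E_valid[OF e(7)] E_valid[OF e(9)] by auto
  define H :: "nat \<Rightarrow> 'k lform" where "H = (\<lambda>i. if i = 0 then vf v0 else if i = 1 then vf v1 else if i = 2 then vf v2
      else if i = 3 then vf v3 else if i = 4 then vf v4 else vf v5)"
  have Hs: "H 0 = vf v0" "H 1 = vf v1" "H 2 = vf v2" "H 3 = vf v3" "H 4 = vf v4" "H 5 = vf v5"
    unfolding H_def by simp_all
  show False
  proof (rule hyp6_elim[OF h, of H])
  qed (simp_all only: Hs line_vf v e ne valid_lform simp_thms)
qed

lemma main_vl: "hyp6_star A B C U3 U2 U1 \<longleftrightarrow> \<not> (\<exists>a1 a2 b1 b2 c1 c2. conf a1 a2 b1 b2 c1 c2)"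
proof
  assume h: "hyp6_star A B C U3 U2 U1"
  show "\<not> (\<exists>a1 a2 b1 b2 c1 c2. conf a1 a2 b1 b2 c1 c2)"
  proof
    assume "\<exists>a1 a2 b1 b2 c1 c2. conf a1 a2 b1 b2 c1 c2"
    then obtain a1 a2 b1 b2 c1 c2 where "conf a1 a2 b1 b2 c1 c2" by blast
    from conf_bad6[OF this] show False using bad6_not_hyp6[OF _ h] by blast
  qed
next
  assume nc: "\<not> (\<exists>a1 a2 b1 b2 c1 c2. conf a1 a2 b1 b2 c1 c2)"
  show "hyp6_star A B C U3 U2 U1"
  proof (rule hyp6_intro)
    fix H :: "nat \<Rightarrow> 'k lform"
    assume f: "is_lform (H 0)" "is_lform (H 1)" "is_lform (H 2)" "is_lform (H 3)" "is_lform (H 4)" "is_lform (H 5)"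
      and l: "LN (H 0) (H 2)" "LN (H 0) (H 3)" "LN (H 0) (H 4)" "LN (H 1) (H 3)" "LN (H 1) (H 4)"
      "LN (H 1) (H 5)" "LN (H 2) (H 4)" "LN (H 2) (H 5)" "LN (H 3) (H 5)"
      and n: "\<not> LN (H 0) (H 1)" "\<not> LN (H 1) (H 2)" "\<not> LN (H 2) (H 3)" "\<not> LN (H 3) (H 4)"
      "\<not> LN (H 4) (H 5)" "\<not> LN (H 5) (H 0)"
    obtain v0 where v0: "valid v0" "hyp (H 0) = hyp (vf v0)" using line_vertex[OF f(1) f(3) l(1)] by blast
    obtain v1 where v1: "valid v1" "hyp (H 1) = hyp (vf v1)" using line_vertex[OF f(2) f(4) l(4)] by blast
    obtain v2 where v2: "valid v2" "hyp (H 2) = hyp (vf v2)" using line_vertex[OF f(3) f(5) l(7)] by blast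
    obtain v3 where v3: "valid v3" "hyp (H 3) = hyp (vf v3)" using line_vertex[OF f(4) f(6) l(9)] by blast
    obtain v4 where v4: "valid v4" "hyp (H 4) = hyp (vf v4)" using line_vertex[OF f(5) f(1) line_sym[OF l(3)]] by blast
    obtain v5 where v5: "valid v5" "hyp (H 5) = hyp (vf v5)" using line_vertex[OF f(6) f(2) line_sym[OF l(6)]] by blast
    have "bad6 v0 v1 v2 v3 v4 v5"
      unfolding bad6_def
      using l n line_E[OF f(1) f(3) v0(1) v2(1) v0(2) v2(2)] line_E[OF f(1) f(4) v0(1) v3(1) v0(2) v3(2)]
        line_E[OF f(1) f(5) v0(1) v4(1) v0(2) v4(2)] line_E[OF f(2) f(4) v1(1) v3(1) v1(2) v3(2)]
        line_E[OF f(2) f(5) v1(1) v4(1) v1(2) v4(2)] line_E[OF f(2) f(6) v1(1) v5(1) v1(2) v5(2)]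
        line_E[OF f(3) f(5) v2(1) v4(1) v2(2) v4(2)] line_E[OF f(3) f(6) v2(1) v5(1) v2(2) v5(2)]
        line_E[OF f(4) f(6) v3(1) v5(1) v3(2) v5(2)]
        line_E[OF f(1) f(2) v0(1) v1(1) v0(2) v1(2)] line_E[OF f(2) f(3) v1(1) v2(1) v1(2) v2(2)]
        line_E[OF f(3) f(4) v2(1) v3(1) v2(2) v3(2)] line_E[OF f(4) f(5) v3(1) v4(1) v3(2) v4(2)]
        line_E[OF f(5) f(6) v4(1) v5(1) v4(2) v5(2)] line_E[OF f(6) f(1) v5(1) v0(1) v5(2) v0(2)]
      by blast
    then have "bad6 (fst v0, snd v0) (fst v1, snd v1) (fst v2, snd v2) (fst v3, snd v3) (fst v4, snd v4) (fst v5, snd v5)"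
      by simp
    from bad6_conf[OF this] nc show False by blast
  qed
qed

end

theorem proposition3p6:
  fixes A B C :: "nat \<Rightarrow> 'k::{alg_closed_field, field_char_0} \<times> 'k"
    and d1 d2 d3 :: nat
    and U3 U2 U1 :: "(nat \<times> nat) set"
  assumes "variety_of_lines A B C d1 d2 d3 U3 U2 U1"
    and "resembles_ferrers U3 d1 d2"
    and "resembles_ferrers U2 d1 d3"
    and "resembles_ferrers U1 d2 d3"
  shows "hyp6_star A B C U3 U2 U1 \<longleftrightarrow>
    (\<forall>a1\<in>{1..d1}. \<forall>a2\<in>{1..d1}. \<forall>b1\<in>{1..d2}. \<forall>b2\<in>{1..d2}. \<forall>c1\<in>{1..d3}. \<forall>c2\<in>{1..d3}.
       \<not> (mu U3 U2 U1 a1 b1 c1 = 3 \<and> mu U3 U2 U1 a1 b2 c1 = 2 \<and>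
          mu U3 U2 U1 a2 b1 c1 = 2 \<and> mu U3 U2 U1 a2 b2 c1 = 2)
     \<or> \<not> (mu U3 U2 U1 a1 b1 c2 = 2 \<and> mu U3 U2 U1 a1 b2 c2 = 2 \<and>
          mu U3 U2 U1 a2 b1 c2 = 2 \<and> mu U3 U2 U1 a2 b2 c2 = 3))"
proof -
  interpret vl A B C d1 d2 d3 U3 U2 U1 using assms(1) by unfold_locales
  have eq: "(\<forall>a1\<in>{1..d1}. \<forall>a2\<in>{1..d1}. \<forall>b1\<in>{1..d2}. \<forall>b2\<in>{1..d2}. \<forall>c1\<in>{1..d3}. \<forall>c2\<in>{1..d3}.
       \<not> (mu U3 U2 U1 a1 b1 c1 = 3 \<and> mu U3 U2 U1 a1 b2 c1 = 2 \<and>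
          mu U3 U2 U1 a2 b1 c1 = 2 \<and> mu U3 U2 U1 a2 b2 c1 = 2)
     \<or> \<not> (mu U3 U2 U1 a1 b1 c2 = 2 \<and> mu U3 U2 U1 a1 b2 c2 = 2 \<and>
          mu U3 U2 U1 a2 b1 c2 = 2 \<and> mu U3 U2 U1 a2 b2 c2 = 3))
     \<longleftrightarrow> \<not> (\<exists>a1 a2 b1 b2 c1 c2. conf a1 a2 b1 b2 c1 c2)"
  proof
    assume R: "\<forall>a1\<in>{1..d1}. \<forall>a2\<in>{1..d1}. \<forall>b1\<in>{1..d2}. \<forall>b2\<in>{1..d2}. \<forall>c1\<in>{1..d3}. \<forall>c2\<in>{1..d3}.
       \<not> (mu U3 U2 U1 a1 b1 c1 = 3 \<and> mu U3 U2 U1 a1 b2 c1 = 2 \<and>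
          mu U3 U2 U1 a2 b1 c1 = 2 \<and> mu U3 U2 U1 a2 b2 c1 = 2)
     \<or> \<not> (mu U3 U2 U1 a1 b1 c2 = 2 \<and> mu U3 U2 U1 a1 b2 c2 = 2 \<and>
          mu U3 U2 U1 a2 b1 c2 = 2 \<and> mu U3 U2 U1 a2 b2 c2 = 3)"
    show "\<not> (\<exists>a1 a2 b1 b2 c1 c2. conf a1 a2 b1 b2 c1 c2)"
    proof
      assume "\<exists>a1 a2 b1 b2 c1 c2. conf a1 a2 b1 b2 c1 c2"
      then obtain a1 a2 b1 b2 c1 c2 where c: "conf a1 a2 b1 b2 c1 c2" by blast
      have r: "a1 \<in> {1..d1}" "a2 \<in> {1..d1}" "b1 \<in> {1..d2}" "b2 \<in> {1..d2}" "c1 \<in> {1..d3}" "c2 \<in> {1..d3}"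
        using conf_range[OF c] by auto
      from R r have "\<not> (mu U3 U2 U1 a1 b1 c1 = 3 \<and> mu U3 U2 U1 a1 b2 c1 = 2 \<and>
          mu U3 U2 U1 a2 b1 c1 = 2 \<and> mu U3 U2 U1 a2 b2 c1 = 2)
        \<or> \<not> (mu U3 U2 U1 a1 b1 c2 = 2 \<and> mu U3 U2 U1 a1 b2 c2 = 2 \<and>
          mu U3 U2 U1 a2 b1 c2 = 2 \<and> mu U3 U2 U1 a2 b2 c2 = 3)" by blast
      then show False using mu_conf[of a1 b1 c1 b2 a2 c2] c by blast
    qed
  next
    assume N: "\<not> (\<exists>a1 a2 b1 b2 c1 c2. conf a1 a2 b1 b2 c1 c2)"
    show "\<forall>a1\<in>{1..d1}. \<forall>a2\<in>{1..d1}. \<forall>b1\<in>{1..d2}. \<forall>b2\<in>{1..d2}. \<forall>c1\<in>{1..d3}. \<forall>c2\<in>{1..d3}.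
       \<not> (mu U3 U2 U1 a1 b1 c1 = 3 \<and> mu U3 U2 U1 a1 b2 c1 = 2 \<and>
          mu U3 U2 U1 a2 b1 c1 = 2 \<and> mu U3 U2 U1 a2 b2 c1 = 2)
     \<or> \<not> (mu U3 U2 U1 a1 b1 c2 = 2 \<and> mu U3 U2 U1 a1 b2 c2 = 2 \<and>
          mu U3 U2 U1 a2 b1 c2 = 2 \<and> mu U3 U2 U1 a2 b2 c2 = 3)"
      using N mu_conf by blast
  qed
  show ?thesis using main_vl eq by simp
qed

end
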